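(* Let $I$ be a monoid and let $A$ be a finite set with an $I$-action $(\alpha_l,\alpha_r)$ whose left component $\alpha_l$ is trivial. Let $\mathrm{A}^r=\{x\in A:\ \text{for all } i\in I,\ \alpha_r(i)|_{xI}\text{ is one-to-one}\}$, where $xI=\{(x)\alpha_r(i):i\in I\}$. Then there is a bijection $\mathrm{Map}^r_I(A)\cong\mathrm{A}^r$.
   Context: Let $I$ be a monoid with operation $\otimes$. For a set $X$, $\mathrm{End}_l(X)$ denotes self-maps written on the left with product $f\circ g$ ($g$ first); $\mathrm{End}_r(X)$ denotes self-maps written on the right, $x\mapsto(x)f$, with $(x)(fg)=((x)f)g$. An $I$-action on $X$ is a pair $(\xi_l,\xi_r)$ of monoid homomorphisms $\xi_l:I\to\mathrm{End}_l(X)$, $\xi_r:I\to\mathrm{End}_r(X)$ with $(\xi_l(i)(x))\xi_r(j)=\xi_l(i)((x)\xi_r(j))$; "$\alpha_l$ trivial" means $\alpha_l(i)=\mathrm{id}_A$ for all $i$. $\mathrm{Map}^r_I(A)$ is the set of functions $f:I\to A$ with $(f(i\otimes j))\alpha_r(i)=\alpha_l(i)(f(j))$ for all $i,j\in I$ (here: $(f(i\otimes j))\alpha_r(i)=f(j)$). *)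

theory Defs
  imports Main
begin

text \<open>A left map al i acts as
x to al i x; a right map ar i acts as x to (x)ar(i), written ar i x, so that
(x)(ij) = ((x)i)j reads ar (i*j) x = ar j (ar i x).\<close>

definition is_I_action ::
  "'a set \<Rightarrow> ('i::monoid_mult \<Rightarrow> 'a \<Rightarrow> 'a) \<Rightarrow> ('i \<Rightarrow> 'a \<Rightarrow> 'a) \<Rightarrow> bool" where
  "is_I_action A al ar \<longleftrightarrow>
     (\<forall>i. \<forall>x\<in>A. al i x \<in> A \<and> ar i x \<in> A) \<and>
     (\<forall>x\<in>A. al 1 x = x \<and> ar 1 x = x) \<and>
     (\<forall>i j. \<forall>x\<in>A. al (i * j) x = al i (al j x)) \<and>
     (\<forall>i j. \<forall>x\<in>A. ar (i * j) x = ar j (ar i x)) \<and>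
     (\<forall>i j. \<forall>x\<in>A. ar j (al i x) = al i (ar j x))"

definition Map_r ::
  "'a set \<Rightarrow> ('i::monoid_mult \<Rightarrow> 'a \<Rightarrow> 'a) \<Rightarrow> ('i \<Rightarrow> 'a \<Rightarrow> 'a) \<Rightarrow> ('i \<Rightarrow> 'a) set" where
  "Map_r A al ar = {f. (\<forall>i. f i \<in> A) \<and> (\<forall>i j. ar i (f (i * j)) = al i (f j))}"

definition orbit_r :: "('i \<Rightarrow> 'a \<Rightarrow> 'a) \<Rightarrow> 'a \<Rightarrow> 'a set" where
  "orbit_r ar x = {ar i x | i. True}"

definition A_r :: "'a set \<Rightarrow> ('i \<Rightarrow> 'a \<Rightarrow> 'a) \<Rightarrow> 'a set" where
  "A_r A ar = {x \<in> A. \<forall>i. inj_on (ar i) (orbit_r ar x)}"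

end

theory Submission
  imports Defs
begin

locale ract =
  fixes A :: "'a set" and ar :: "'i::monoid_mult \<Rightarrow> 'a \<Rightarrow> 'a"
  assumes fin: "finite A"
    and cl: "\<And>i x. x \<in> A \<Longrightarrow> ar i x \<in> A"
    and one: "\<And>x. x \<in> A \<Longrightarrow> ar 1 x = x"
    and mul: "\<And>i j x. x \<in> A \<Longrightarrow> ar (i * j) x = ar j (ar i x)"
begin

lemma pw: "y \<in> A \<Longrightarrow> ar (a ^ (m + n)) y = ar (a ^ n) (ar (a ^ m) y)"
  by (simp add: power_add mul)

lemma orbit_sub: "x \<in> A \<Longrightarrow> orbit_r ar x \<subseteq> A"
  by (auto simp: orbit_r_def cl)

lemma orbit_fin: "x \<in> A \<Longrightarrow> finite (orbit_r ar x)"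
  using orbit_sub fin finite_subset by blast

lemma orbit_mem: "ar k x \<in> orbit_r ar x"
  by (auto simp: orbit_r_def)

lemma orbit_self: "x \<in> A \<Longrightarrow> x \<in> orbit_r ar x"
  using orbit_mem[of 1 x] one by simp

lemma orbit_closed: "x \<in> A \<Longrightarrow> y \<in> orbit_r ar x \<Longrightarrow> ar i y \<in> orbit_r ar x"
  by (auto simp: orbit_r_def mul[symmetric])

context
  fixes f :: "'i \<Rightarrow> 'a"
  assumes fA: "\<And>i. f i \<in> A"
    and feq: "\<And>i j. ar i (f (i * j)) = f j"
begin

lemma L3: "f j = ar (a ^ n) (f (a ^ n * j))"
  using feq by simp

lemma L4: "\<exists>M p. 1 \<le> p \<and> p \<le> M \<and> ar (a ^ p) (f (a ^ M)) = f (a ^ M)"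
proof -
  let ?g = "\<lambda>n. f (a ^ n)"
  have "\<not> inj_on ?g {0..card A}"
  proof
    assume "inj_on ?g {0..card A}"
    hence "card {0..card A} \<le> card A"
      using card_inj_on_le[of ?g "{0..card A}" A] fA fin by auto
    thus False by simp
  qed
  then obtain m m' where mm: "m \<in> {0..card A}" "m' \<in> {0..card A}" "m \<noteq> m'" "?g m = ?g m'"
    unfolding inj_on_def by blast
  then obtain u v where uv: "u < v" "?g u = ?g v"
    by (metis linorder_neqE_nat)
  have "f (a ^ u) = ar (a ^ (v - u)) (f (a ^ (v - u) * a ^ u))" by (rule L3)
  also have "a ^ (v - u) * a ^ u = a ^ v" using uv(1)
    by (metis le_add_diff_inverse2 less_imp_le power_add)
  finally have "ar (a ^ (v - u)) (f (a ^ v)) = f (a ^ v)" using uv(2) by simp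
  thus ?thesis using uv(1) by (intro exI[of _ v] exI[of _ "v - u"]) auto
qed

lemma key: "ar a (f 1) = f (a ^ (p - 1)) \<and> f a \<in> orbit_r ar (f 1)"
  if "1 \<le> p" "p \<le> M" "ar (a ^ p) (f (a ^ M)) = f (a ^ M)" for p M
proof -
  define z where "z = f (a ^ M)"
  have zA: "z \<in> A" using fA z_def by simp
  have per: "ar (a ^ (t + p)) z = ar (a ^ t) z" for t
    using pw[OF zA, of a p t] that(3) z_def by (simp add: add.commute)
  have x: "f 1 = ar (a ^ M) z" using L3[of 1 a M] z_def by simp
  have "ar a (f 1) = ar (a ^ (M + 1)) z"
    using x pw[OF zA, of a M 1] by simp
  also have "M + 1 = (M + 1 - p) + p" using that by simp
  hence "ar (a ^ (M + 1)) z = ar (a ^ (M + 1 - p)) z" using per[of "M + 1 - p"] by simp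
  also have "f (a ^ (p - 1)) = ar (a ^ (M + 1 - p)) (f (a ^ (M + 1 - p) * a ^ (p - 1)))"
    by (rule L3)
  moreover have "a ^ (M + 1 - p) * a ^ (p - 1) = a ^ M"
  proof -
    have "(M + 1 - p) + (p - 1) = M" using that by simp
    thus ?thesis by (simp only: power_add[symmetric])
  qed
  ultimately have 1: "ar a (f 1) = f (a ^ (p - 1))" using z_def by simp
  have "f a = ar (a ^ (M - 1)) (f (a ^ (M - 1) * a))" by (rule L3)
  also have "a ^ (M - 1) * a = a ^ M"
  proof -
    have "Suc (M - 1) = M" using that by simp
    thus ?thesis by (simp only: power_Suc2[symmetric])
  qed
  finally have "f a = ar (a ^ (M - 1)) z" using z_def by simp
  also have "\<dots> = ar (a ^ ((M - 1) + p)) z" using per by simp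
  also have "(M - 1) + p = M + (p - 1)" using that by simp
  also have "ar (a ^ (M + (p - 1))) z = ar (a ^ (p - 1)) (f 1)"
    using pw[OF zA] x by simp
  finally have "f a \<in> orbit_r ar (f 1)" using orbit_mem by simp
  with 1 show ?thesis by simp
qed

lemma orbit_eq: "orbit_r ar (f 1) = range f"
proof
  show "orbit_r ar (f 1) \<subseteq> range f"
  proof
    fix y assume "y \<in> orbit_r ar (f 1)"
    then obtain a where "y = ar a (f 1)" by (auto simp: orbit_r_def)
    moreover obtain M p where "1 \<le> p" "p \<le> M" "ar (a ^ p) (f (a ^ M)) = f (a ^ M)"
      using L4 by blast
    ultimately show "y \<in> range f" using key by blast
  qed
next
  show "range f \<subseteq> orbit_r ar (f 1)"
  proof
    fix y assume "y \<in> range f"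
    then obtain a where "y = f a" by auto
    moreover obtain M p where "1 \<le> p" "p \<le> M" "ar (a ^ p) (f (a ^ M)) = f (a ^ M)"
      using L4 by blast
    ultimately show "y \<in> orbit_r ar (f 1)" using key by blast
  qed
qed

lemma in_Ar: "f 1 \<in> A_r A ar"
proof -
  have x: "f 1 \<in> A" by (rule fA)
  have "inj_on (ar i) (orbit_r ar (f 1))" for i
  proof (rule eq_card_imp_inj_on)
    show "finite (orbit_r ar (f 1))" using orbit_fin x by simp
    have "ar i ` orbit_r ar (f 1) = orbit_r ar (f 1)"
    proof
      show "ar i ` orbit_r ar (f 1) \<subseteq> orbit_r ar (f 1)" using orbit_closed x by blast
      show "orbit_r ar (f 1) \<subseteq> ar i ` orbit_r ar (f 1)"
      proof
        fix y assume "y \<in> orbit_r ar (f 1)"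
        then obtain j where "y = f j" using orbit_eq by auto
        hence "y = ar i (f (i * j))" using feq by simp
        moreover have "f (i * j) \<in> orbit_r ar (f 1)" using orbit_eq by auto
        ultimately show "y \<in> ar i ` orbit_r ar (f 1)" by blast
      qed
    qed
    thus "card (ar i ` orbit_r ar (f 1)) = card (orbit_r ar (f 1))" by simp
  qed
  thus ?thesis using x by (simp add: A_r_def)
qed

end

lemma Map_iff: "(\<forall>i x. x \<in> A \<longrightarrow> al i x = x) \<Longrightarrow>
   f \<in> Map_r A al ar \<longleftrightarrow> (\<forall>i. f i \<in> A) \<and> (\<forall>i j. ar i (f (i * j)) = f j)"
  by (auto simp: Map_r_def)

lemma bij: "(\<forall>i x. x \<in> A \<longrightarrow> al i x = x) \<Longrightarrow>
   bij_betw (\<lambda>f. f 1) (Map_r A al ar) (A_r A ar)"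
proof -
  assume al: "\<forall>i x. x \<in> A \<longrightarrow> al i x = x"
  have perm: "ar i ` orbit_r ar x = orbit_r ar x" "inj_on (ar i) (orbit_r ar x)"
    if "x \<in> A_r A ar" for x i
  proof -
    have xA: "x \<in> A" "inj_on (ar i) (orbit_r ar x)" using that by (auto simp: A_r_def)
    show "inj_on (ar i) (orbit_r ar x)" by (rule xA(2))
    show "ar i ` orbit_r ar x = orbit_r ar x"
      using endo_inj_surj[OF orbit_fin[OF xA(1)] _ xA(2)] orbit_closed[OF xA(1)] by blast
  qed
  show ?thesis
  proof (rule bij_betwI')
    fix f g assume f: "f \<in> Map_r A al ar" and g: "g \<in> Map_r A al ar"
    have fA: "\<forall>i. f i \<in> A" "\<forall>i j. ar i (f (i * j)) = f j" using f Map_iff[OF al] by auto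
    have gA: "\<forall>i. g i \<in> A" "\<forall>i j. ar i (g (i * j)) = g j" using g Map_iff[OF al] by auto
    show "(f 1 = g 1) = (f = g)"
    proof
      assume e: "f 1 = g 1"
      have xr: "f 1 \<in> A_r A ar" using in_Ar fA by blast
      show "f = g"
      proof
        fix i
        have "f i \<in> orbit_r ar (f 1)" using orbit_eq[of f] fA by blast
        moreover have "orbit_r ar (g 1) = range g" by (rule orbit_eq) (use gA in auto)
        hence "g i \<in> orbit_r ar (f 1)" using e by simp
        moreover have "ar i (f i) = ar i (g i)"
          using fA(2) gA(2) e by (metis mult_1_right)
        ultimately show "f i = g i" using perm(2)[OF xr, of i] by (meson inj_onD)
      qed
    qed simp
    show "f 1 \<in> A_r A ar" using in_Ar fA by blast
  next
    fix x assume xr: "x \<in> A_r A ar"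
    have xA: "x \<in> A" using xr by (simp add: A_r_def)
    have ex: "\<exists>!y. y \<in> orbit_r ar x \<and> ar i y = x" for i
    proof -
      have "x \<in> ar i ` orbit_r ar x" using perm(1)[OF xr] orbit_self[OF xA] by simp
      then obtain y where y: "y \<in> orbit_r ar x" "ar i y = x" by auto
      show ?thesis
      proof (rule ex1I[of _ y])
        show "y \<in> orbit_r ar x \<and> ar i y = x" using y by simp
        fix w assume "w \<in> orbit_r ar x \<and> ar i w = x"
        thus "w = y" using y perm(2)[OF xr, of i] by (auto dest: inj_onD)
      qed
    qed
    define f where "f i = (THE y. y \<in> orbit_r ar x \<and> ar i y = x)" for i
    have fi: "f i \<in> orbit_r ar x" "ar i (f i) = x" for i
      using theI'[OF ex[of i]] f_def by auto
    have fu: "y \<in> orbit_r ar x \<Longrightarrow> ar i y = x \<Longrightarrow> f i = y" for i y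
      using ex[of i] fi[of i] by blast
    have fA: "f i \<in> A" for i using fi orbit_sub[OF xA] by blast
    have feq: "ar i (f (i * j)) = f j" for i j
    proof -
      have "ar j (ar i (f (i * j))) = x" using mul fi fA by metis
      moreover have "ar i (f (i * j)) \<in> orbit_r ar x" using orbit_closed[OF xA] fi by blast
      ultimately show ?thesis using fu by simp
    qed
    have "f \<in> Map_r A al ar" using Map_iff[OF al] fA feq by blast
    moreover have "x = f 1" using fu[of x 1] orbit_self[OF xA] one[OF xA] by simp
    ultimately show "\<exists>f \<in> Map_r A al ar. x = f 1" by blast
  qed
qed

end

theorem mainTheorem12:
  fixes A :: "'a set"
    and al ar :: "'i::monoid_mult \<Rightarrow> 'a \<Rightarrow> 'a"
  assumes "finite A"
    and "is_I_action A al ar"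
    and "\<forall>i. \<forall>x\<in>A. al i x = x"
  shows "\<exists>\<phi>. bij_betw \<phi> (Map_r A al ar) (A_r A ar)"
proof -
  interpret ract A ar
    using assms(1,2) by unfold_locales (auto simp: is_I_action_def)
  show ?thesis using bij assms(3) by blast
qed

end
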